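(* Let $(\mathbb{X},d,\mu)$ be a proper metric measure space satisfying the $\delta$-annular decay property for some $\delta\in(0,1]$ with constant $D_\delta\geq1$. Let $\varrho$ be a continuous admissible radius function in a bounded domain $\Omega\subset\mathbb{X}$. Then there is $C=C(D_\delta,\mu)>0$ such that for every compact $K\subset\Omega$ and all $x,y\in K$, $$\frac{\mu(B_x\triangle B_y)}{\max\{\mu(B_x),\mu(B_y)\}}\leq C\left(\frac{\widehat\omega_\varrho(d(x,y))}{\varrho_K}\right)^\delta.$$
   Context: A metric space is proper if closed bounded sets are compact. A metric measure space $(\mathbb{X},d,\mu)$ is a metric space with a positive Borel regular measure $\mu$ with $0<\mu(B)<\infty$ for every ball $B$. It satisfies the $\delta$-annular decay property if there is $D_\delta\ge1$ with $\mu(B(x,R)\setminus B(x,r))\leq D_\delta\left(\frac{R-r}{R}\right)^\delta\mu(B(x,R))$ for all $x$, $0<r\leq R$. An admissible radius function in $\Omega$ is $\varrho\in C(\overline\Omega)$, $\varrho\ge0$, with $0<\varrho(x)\leq\mathrm{dist}(x,\partial\Omega)$ for $x\in\Omega$ and $\varrho=0$ exactly on $\partial\Omega$. $\varrho_K=\inf_K\varrho$, $B_x=\overline{B}(x,\varrho(x))$, $A\triangle B=(A\setminus B)\cup(B\setminus A)$. A modulus of continuity is a nondecreasing continuous $\omega:[0,\mathrm{diam}\,\Omega]\to[0,\infty)$ with $\omega(0)=0$. Fix a concave modulus of continuity $\omega_{\varrho,\Omega}$ for $\varrho$ on $\Omega$ with $\omega_{\varrho,\Omega}(\mathrm{diam}\,\Omega)\le\mathrm{diam}\,\Omega$;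 set $\widehat\omega_\varrho(t)=t$ if $\omega_{\varrho,\Omega}(t)\le t$ for all $t\in[0,\mathrm{diam}\,\Omega]$, and otherwise $\widehat\omega_\varrho(t)=\frac{\mathrm{diam}\,\Omega}{\omega_{\varrho,\Omega}(\mathrm{diam}\,\Omega)}\omega_{\varrho,\Omega}(t)$. *)

theory Defs
  imports "HOL-Analysis.Analysis"
begin

definition proper_space :: "'a::metric_space itself \<Rightarrow> bool" where
  "proper_space _ \<longleftrightarrow> (\<forall>S::'a set. closed S \<and> bounded S \<longrightarrow> compact S)"

definition mm_space :: "'a::metric_space measure \<Rightarrow> bool" where
  "mm_space \<mu> \<longleftrightarrow> sets \<mu> = sets borel \<and>
     (\<forall>x r. 0 < r \<longrightarrow> 0 < emeasure \<mu> (ball x r) \<and> emeasure \<mu> (ball x r) < \<infinity>) \<and>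
     (\<forall>x r. 0 < r \<longrightarrow> 0 < emeasure \<mu> (cball x r) \<and> emeasure \<mu> (cball x r) < \<infinity>)"

definition annular_decay :: "'a::metric_space measure \<Rightarrow> real \<Rightarrow> real \<Rightarrow> bool" where
  "annular_decay \<mu> \<delta> D \<longleftrightarrow> D \<ge> 1 \<and>
     (\<forall>x r R. 0 < r \<and> r \<le> R \<longrightarrow>
        measure \<mu> (ball x R - ball x r) \<le> D * ((R - r) / R) powr \<delta> * measure \<mu> (ball x R))"

definition domain :: "'a::metric_space set \<Rightarrow> bool" where
  "domain \<Omega> \<longleftrightarrow> open \<Omega> \<and> connected \<Omega> \<and> \<Omega> \<noteq> {}"

definition admissible_radius :: "'a::metric_space set \<Rightarrow> ('a \<Rightarrow> real) \<Rightarrow> bool" where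
  "admissible_radius \<Omega> \<rho> \<longleftrightarrow> continuous_on (closure \<Omega>) \<rho> \<and>
     (\<forall>x\<in>closure \<Omega>. \<rho> x \<ge> 0) \<and>
     (\<forall>x\<in>\<Omega>. 0 < \<rho> x \<and> \<rho> x \<le> infdist x (frontier \<Omega>)) \<and>
     (\<forall>x\<in>closure \<Omega>. \<rho> x = 0 \<longleftrightarrow> x \<in> frontier \<Omega>)"

definition modulus_of_continuity :: "'a::metric_space set \<Rightarrow> (real \<Rightarrow> real) \<Rightarrow> bool" where
  "modulus_of_continuity \<Omega> \<omega> \<longleftrightarrow>
     mono_on {0..diameter \<Omega>} \<omega> \<and> continuous_on {0..diameter \<Omega>} \<omega> \<and>
     (\<forall>t\<in>{0..diameter \<Omega>}. \<omega> t \<ge> 0) \<and> \<omega> 0 = 0"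

definition modulus_for :: "'a::metric_space set \<Rightarrow> ('a \<Rightarrow> real) \<Rightarrow> (real \<Rightarrow> real) \<Rightarrow> bool" where
  "modulus_for \<Omega> \<rho> \<omega> \<longleftrightarrow> modulus_of_continuity \<Omega> \<omega> \<and>
     (\<forall>x\<in>\<Omega>. \<forall>y\<in>\<Omega>. \<bar>\<rho> x - \<rho> y\<bar> \<le> \<omega> (dist x y))"

definition omega_hat :: "'a::metric_space set \<Rightarrow> (real \<Rightarrow> real) \<Rightarrow> real \<Rightarrow> real" where
  "omega_hat \<Omega> \<omega> t =
     (if (\<forall>s\<in>{0..diameter \<Omega>}. \<omega> s \<le> s) then t
      else diameter \<Omega> / \<omega> (diameter \<Omega>) * \<omega> t)"

definition symdiff :: "'a set \<Rightarrow> 'a set \<Rightarrow> 'a set" where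
  "symdiff A B = (A - B) \<union> (B - A)"

end

theory Submission
  imports Defs
begin

lemma omega_hat_ge:
  fixes \<Omega> :: "'a::metric_space set"
  assumes mf: "modulus_for \<Omega> \<rho> \<omega>" and cc: "concave_on {0..diameter \<Omega>} \<omega>"
    and wd: "\<omega> (diameter \<Omega>) \<le> diameter \<Omega>"
    and d: "0 \<le> d" "d \<le> diameter \<Omega>"
  shows "d \<le> omega_hat \<Omega> \<omega> d \<and> \<omega> d \<le> omega_hat \<Omega> \<omega> d"
proof (cases "\<forall>s\<in>{0..diameter \<Omega>}. \<omega> s \<le> s")
  case True
  then show ?thesis using d by (simp add: omega_hat_def)
next
  case False
  define Dm where "Dm = diameter \<Omega>"
  have moc: "modulus_of_continuity \<Omega> \<omega>" using mf by (simp add: modulus_for_def)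
  then have mono: "mono_on {0..Dm} \<omega>" and w0: "\<omega> 0 = 0" and nn: "\<And>t. t\<in>{0..Dm} \<Longrightarrow> \<omega> t \<ge> 0"
    by (auto simp: modulus_of_continuity_def Dm_def)
  from False obtain s0 where s0: "s0 \<in> {0..Dm}" "\<omega> s0 > s0" by (auto simp: Dm_def)
  have "\<omega> s0 \<le> \<omega> Dm" using mono s0 by (auto intro: mono_onD)
  hence wpos: "\<omega> Dm > 0" using s0 by auto
  have Dmpos: "Dm > 0" using s0 w0 by (cases "s0 = 0") auto
  have wdm: "\<omega> Dm \<le> Dm" using wd by (simp add: Dm_def)
  have eq: "omega_hat \<Omega> \<omega> d = Dm / \<omega> Dm * \<omega> d" using False unfolding omega_hat_def Dm_def by (simp only: if_False)
  have cc': "concave_on {0..Dm} \<omega>" using cc by (simp add: Dm_def)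
  have "(1 - d/Dm) * \<omega> 0 + (d/Dm) * \<omega> Dm \<le> \<omega> ((1 - d/Dm) *\<^sub>R 0 + (d/Dm) *\<^sub>R Dm)"
    using concave_onD_Icc[OF cc', of "d/Dm"] d Dmpos by (simp add: Dm_def)
  hence c1: "(d/Dm) * \<omega> Dm \<le> \<omega> d" using w0 Dmpos by simp
  have wd0: "\<omega> d \<ge> 0" using nn d by (simp add: Dm_def)
  have "d = Dm / \<omega> Dm * ((d/Dm) * \<omega> Dm)" using wpos Dmpos by (simp add: field_simps)
  also have "\<dots> \<le> Dm / \<omega> Dm * \<omega> d" using c1 wpos Dmpos by (intro mult_left_mono) auto
  finally have A: "d \<le> omega_hat \<Omega> \<omega> d" using eq by simp
  have "1 \<le> Dm / \<omega> Dm" using wpos wdm by simp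
  hence "1 * \<omega> d \<le> Dm / \<omega> Dm * \<omega> d" using wd0 by (intro mult_right_mono) auto
  then show ?thesis using A eq by simp
qed


lemma key_est:
  fixes \<mu> :: "'a::metric_space measure" and x y :: 'a
  assumes mm: "mm_space \<mu>" and ad: "annular_decay \<mu> \<delta> D" and dp: "0 < \<delta>"
    and r: "0 < r" and s: "0 < s" and L: "0 < L" "dist x y \<le> L" "\<bar>r - s\<bar> \<le> L" "4 * L \<le> r"
    and half: "D * (3 * L / r) powr \<delta> \<le> 1/2"
  shows "measure \<mu> (symdiff (cball x r) (cball y s)) \<le> 2 * D * (5 * L / r) powr \<delta> * measure \<mu> (cball x r)"
proof -
  have sets: "sets \<mu> = sets borel" using mm by (simp add: mm_space_def)
  have fin: "\<And>z e. 0 < e \<Longrightarrow> ball z e \<in> fmeasurable \<mu>"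
    using mm sets by (auto simp: mm_space_def intro!: fmeasurableI)
  have finc: "\<And>z e. 0 < e \<Longrightarrow> cball z e \<in> fmeasurable \<mu>"
    using mm sets by (auto simp: mm_space_def intro!: fmeasurableI)
  have Dge: "D \<ge> 1" using ad by (simp add: annular_decay_def)
  have AD: "\<And>r R. 0 < r \<Longrightarrow> r \<le> R \<Longrightarrow> measure \<mu> (ball x R - ball x r) \<le> D * ((R - r) / R) powr \<delta> * measure \<mu> (ball x R)"
    using ad by (simp add: annular_decay_def)
  define b where "b = r + 3 * L"
  define a where "a = r - 2 * L"
  have apos: "0 < a" using L by (simp add: a_def)
  have ab: "a \<le> b" using L by (simp add: a_def b_def)
  have rb: "r \<le> b" using L by (simp add: b_def)
  have sub: "symdiff (cball x r) (cball y s) \<subseteq> ball x b - ball x a"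
  proof
    fix z assume z: "z \<in> symdiff (cball x r) (cball y s)"
    have t1: "dist x z \<le> dist x y + dist y z" by (rule dist_triangle)
    have t2: "dist y z \<le> dist y x + dist x z" by (rule dist_triangle)
    have "dist x z < b" using z t1 L by (auto simp: symdiff_def b_def dist_commute)
    moreover have "\<not> dist x z < a"
    proof
      assume "dist x z < a"
      hence "dist x z \<le> r" "dist y z \<le> s" using t2 L by (auto simp: a_def dist_commute)
      thus False using z by (auto simp: symdiff_def)
    qed
    ultimately show "z \<in> ball x b - ball x a" by simp
  qed
  have smeas: "symdiff (cball x r) (cball y s) \<in> sets \<mu>" unfolding symdiff_def sets by auto
  have "measure \<mu> (symdiff (cball x r) (cball y s)) \<le> measure \<mu> (ball x b - ball x a)"
    using sub smeas fin[of b] apos ab by (intro measure_mono_fmeasurable fmeasurable_Diff) (auto simp: sets)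
  also have "\<dots> \<le> D * ((b - a) / b) powr \<delta> * measure \<mu> (ball x b)" using AD apos ab by simp
  also have "\<dots> \<le> D * (5 * L / r) powr \<delta> * measure \<mu> (ball x b)"
  proof -
    have "(b - a) / b \<le> 5 * L / r" using L r rb by (simp add: a_def b_def frac_le)
    hence "((b - a) / b) powr \<delta> \<le> (5 * L / r) powr \<delta>" using dp apos ab by (intro powr_mono2) auto
    thus ?thesis using Dge by (intro mult_right_mono mult_left_mono) auto
  qed
  also have "\<dots> \<le> D * (5 * L / r) powr \<delta> * (2 * measure \<mu> (cball x r))"
  proof -
    have m1: "measure \<mu> (ball x b - ball x r) \<le> D * ((b - r) / b) powr \<delta> * measure \<mu> (ball x b)"
      using AD r rb by simp
    have "(b - r) / b \<le> 3 * L / r" using L r rb by (simp add: b_def frac_le)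
    hence "((b - r) / b) powr \<delta> \<le> (3 * L / r) powr \<delta>" using dp rb r by (intro powr_mono2) auto
    hence "D * ((b - r) / b) powr \<delta> \<le> 1/2" using half Dge
      by (meson dual_order.trans less_le_not_le mult_left_mono order_less_le_trans zero_less_one)
    hence m2: "measure \<mu> (ball x b - ball x r) \<le> 1/2 * measure \<mu> (ball x b)"
      using m1 by (meson measure_nonneg mult_right_mono order_trans)
    have "measure \<mu> (ball x b - ball x r) = measure \<mu> (ball x b) - measure \<mu> (ball x r)"
      using fin[of b] r rb by (intro measure_Diff) (auto simp: sets fmeasurable_def top.not_eq_extremum)
    hence "measure \<mu> (ball x b) \<le> 2 * measure \<mu> (ball x r)" using m2 by simp
    also have "measure \<mu> (ball x r) \<le> measure \<mu> (cball x r)"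
      using finc[of r] r by (intro measure_mono_fmeasurable) (auto simp: sets)
    finally have "measure \<mu> (ball x b) \<le> 2 * measure \<mu> (cball x r)" by simp
    thus ?thesis using Dge by (intro mult_left_mono) auto
  qed
  finally show ?thesis by simp
qed


theorem lemma3p8:
  fixes \<mu> :: "'a::metric_space measure" and \<delta> D :: real
  assumes "proper_space TYPE('a)"
    and "mm_space \<mu>"
    and "0 < \<delta>" and "\<delta> \<le> 1"
    and "annular_decay \<mu> \<delta> D"
  shows "\<exists>C>0. \<forall>(\<Omega>::'a set) \<rho> \<omega>.
           domain \<Omega> \<and> bounded \<Omega> \<and> admissible_radius \<Omega> \<rho> \<and>
           modulus_for \<Omega> \<rho> \<omega> \<and> concave_on {0..diameter \<Omega>} \<omega> \<and>
           \<omega> (diameter \<Omega>) \<le> diameter \<Omega> \<longrightarrow>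
           (\<forall>K. compact K \<and> K \<subseteq> \<Omega> \<longrightarrow>
              (\<forall>x\<in>K. \<forall>y\<in>K.
                 measure \<mu> (symdiff (cball x (\<rho> x)) (cball y (\<rho> y)))
                   / max (measure \<mu> (cball x (\<rho> x))) (measure \<mu> (cball y (\<rho> y)))
                 \<le> C * (omega_hat \<Omega> \<omega> (dist x y) / (INF z\<in>K. \<rho> z)) powr \<delta>))"
proof -
  note mm = assms(2) and dp = assms(3) and ad = assms(5)
  have Dge: "D \<ge> 1" using ad by (simp add: annular_decay_def)
  have sets: "sets \<mu> = sets borel" using mm by (simp add: mm_space_def)
  define q where "q = (1 / (2 * D)) powr (1 / \<delta>)"
  define c where "c = min (1/4) (q / 3)"
  define C where "C = max (2 * D * 5 powr \<delta>) (2 / c powr \<delta>)"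
  have qpos: "q > 0" using Dge by (simp add: q_def)
  have cpos: "c > 0" using qpos by (simp add: c_def)
  have Cpos: "C > 0" using Dge cpos by (simp add: C_def max_def)
  have qd: "q powr \<delta> = 1 / (2 * D)" using Dge dp by (simp add: q_def powr_powr)
  show ?thesis
  proof (intro exI[of _ C] conjI Cpos allI impI ballI)
    fix \<Omega> :: "'a set" and \<rho> \<omega> K x y
    assume H: "domain \<Omega> \<and> bounded \<Omega> \<and> admissible_radius \<Omega> \<rho> \<and>
           modulus_for \<Omega> \<rho> \<omega> \<and> concave_on {0..diameter \<Omega>} \<omega> \<and>
           \<omega> (diameter \<Omega>) \<le> diameter \<Omega>"
      and HK: "compact K \<and> K \<subseteq> \<Omega>" and x: "x \<in> K" and y: "y \<in> K"
    have bdd: "bounded \<Omega>" and adm: "admissible_radius \<Omega> \<rho>" and mf: "modulus_for \<Omega> \<rho> \<omega>"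
      and cc: "concave_on {0..diameter \<Omega>} \<omega>" and wd: "\<omega> (diameter \<Omega>) \<le> diameter \<Omega>"
      using H by auto
    have KO: "K \<subseteq> \<Omega>" and cK: "compact K" using HK by auto
    have pos: "\<And>z. z \<in> \<Omega> \<Longrightarrow> 0 < \<rho> z" using adm by (simp add: admissible_radius_def)
    have "continuous_on K \<rho>" using adm KO closure_subset
      by (auto simp: admissible_radius_def intro: continuous_on_subset)
    then obtain z0 where z0: "z0 \<in> K" "\<And>z. z \<in> K \<Longrightarrow> \<rho> z0 \<le> \<rho> z"
      using continuous_attains_inf[OF cK] x by blast
    define m where "m = (INF z\<in>K. \<rho> z)"
    have bb: "bdd_below (\<rho> ` K)" using z0 by (intro bdd_belowI[of _ "\<rho> z0"]) auto
    have mpos: "m > 0"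
    proof -
      have "\<rho> z0 \<le> m" unfolding m_def using x z0 by (intro cINF_greatest) auto
      moreover have "\<rho> z0 > 0" using pos z0 KO by auto
      ultimately show ?thesis by simp
    qed
    have mx: "m \<le> \<rho> x" and my: "m \<le> \<rho> y" unfolding m_def using x y bb by (auto intro: cINF_lower)
    define r where "r = \<rho> x"
    define s where "s = \<rho> y"
    define d where "d = dist x y"
    define L where "L = omega_hat \<Omega> \<omega> d"
    have dD: "d \<le> diameter \<Omega>" unfolding d_def using bdd x y KO by (intro diameter_bounded_bound) auto
    have LL: "d \<le> L \<and> \<omega> d \<le> L" unfolding L_def using omega_hat_ge[OF mf cc wd, of d] dD by (simp add: d_def)
    have rs: "\<bar>r - s\<bar> \<le> \<omega> d" using mf x y KO by (auto simp: modulus_for_def r_def s_def d_def)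
    have rpos: "r > 0" and spos: "s > 0" using mx my mpos by (auto simp: r_def s_def)
    have mcx: "measure \<mu> (cball x r) > 0"
      using mm rpos unfolding measure_def by (simp add: mm_space_def enn2real_positive_iff)
    define M where "M = max (measure \<mu> (cball x r)) (measure \<mu> (cball y s))"
    have Mpos: "M > 0" using mcx by (simp add: M_def)
    have smeas: "symdiff (cball x r) (cball y s) \<in> sets \<mu>" unfolding symdiff_def sets by auto
    have goal: "measure \<mu> (symdiff (cball x r) (cball y s)) / M \<le> C * (L / m) powr \<delta>"
    proof (cases "L = 0")
      case True
      hence "x = y" using LL by (simp add: d_def)
      hence "symdiff (cball x r) (cball y s) = {}" by (simp add: symdiff_def r_def s_def)
      thus ?thesis using Cpos by simp
    next
      case False
      have "0 \<le> d" by (simp add: d_def)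
      hence Lpos: "L > 0" using LL False by linarith
      define t where "t = L / m"
      have tpos: "t > 0" using Lpos mpos by (simp add: t_def)
      show ?thesis
      proof (cases "t < c")
        case True
        have Lm: "L < c * m" using True mpos by (simp add: t_def field_simps)
        have "c * m \<le> (1/4) * m" using mpos by (intro mult_right_mono) (auto simp: c_def)
        hence L4: "4 * L \<le> r" using Lm mx by (simp add: r_def)
        have "3 * L / r \<le> q"
        proof -
          have "c * m \<le> (q/3) * m" using mpos by (intro mult_right_mono) (auto simp: c_def)
          hence "3 * L \<le> q * m" using Lm by simp
          also have "\<dots> \<le> q * r" using mx qpos by (simp add: r_def)
          finally show ?thesis using rpos by (simp add: field_simps)
        qed
        hence "(3 * L / r) powr \<delta> \<le> q powr \<delta>" using dp Lpos rpos by (intro powr_mono2) auto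
        hence "D * (3 * L / r) powr \<delta> \<le> D * (1 / (2 * D))" using Dge qd by (intro mult_left_mono) auto
        hence half: "D * (3 * L / r) powr \<delta> \<le> 1/2" using Dge by simp
        have est: "measure \<mu> (symdiff (cball x r) (cball y s)) \<le> 2 * D * (5 * L / r) powr \<delta> * measure \<mu> (cball x r)"
          by (rule key_est[OF mm ad dp rpos spos Lpos _ _ L4 half]) (use LL rs in \<open>auto simp: d_def\<close>)
        have "(5 * L / r) powr \<delta> \<le> (5 * t) powr \<delta>"
          using dp Lpos rpos mpos mx by (intro powr_mono2) (auto simp: t_def r_def intro!: frac_le)
        also have "\<dots> = 5 powr \<delta> * t powr \<delta>" using tpos by (simp add: powr_mult)
        finally have p5: "(5 * L / r) powr \<delta> \<le> 5 powr \<delta> * t powr \<delta>" .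
        have "measure \<mu> (symdiff (cball x r) (cball y s)) \<le> 2 * D * (5 powr \<delta> * t powr \<delta>) * M"
        proof -
          have "2 * D * (5 * L / r) powr \<delta> * measure \<mu> (cball x r) \<le> 2 * D * (5 powr \<delta> * t powr \<delta>) * measure \<mu> (cball x r)"
            using p5 Dge by (intro mult_right_mono mult_left_mono) auto
          also have "\<dots> \<le> 2 * D * (5 powr \<delta> * t powr \<delta>) * M"
            using Dge by (intro mult_left_mono) (auto simp: M_def)
          finally show ?thesis using est by simp
        qed
        hence "measure \<mu> (symdiff (cball x r) (cball y s)) / M \<le> 2 * D * 5 powr \<delta> * t powr \<delta>"
          using Mpos by (simp add: divide_le_eq mult.assoc)
        also have "\<dots> \<le> C * t powr \<delta>" by (intro mult_right_mono) (auto simp: C_def)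
        finally show ?thesis by (simp add: t_def)
      next
        case False
        have fx: "cball x r \<in> fmeasurable \<mu>" and fy: "cball y s \<in> fmeasurable \<mu>"
          using mm rpos spos sets by (auto simp: mm_space_def intro!: fmeasurableI)
        have "measure \<mu> (symdiff (cball x r) (cball y s)) \<le> measure \<mu> (cball x r - cball y s) + measure \<mu> (cball y s - cball x r)"
          unfolding symdiff_def by (intro measure_Un_le) (auto simp: sets)
        also have "\<dots> \<le> measure \<mu> (cball x r) + measure \<mu> (cball y s)"
          using fx fy by (intro add_mono measure_mono_fmeasurable) (auto simp: sets)
        also have "\<dots> \<le> 2 * M" by (simp add: M_def)
        finally have "measure \<mu> (symdiff (cball x r) (cball y s)) / M \<le> 2" using Mpos by (simp add: divide_le_eq)
        also have "2 = (2 / c powr \<delta>) * c powr \<delta>" using cpos by simp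
        also have "\<dots> \<le> (2 / c powr \<delta>) * t powr \<delta>"
          using False cpos dp by (intro mult_left_mono powr_mono2) auto
        also have "\<dots> \<le> C * t powr \<delta>" by (intro mult_right_mono) (auto simp: C_def)
        finally show ?thesis by (simp add: t_def)
      qed
    qed
    show "measure \<mu> (symdiff (cball x (\<rho> x)) (cball y (\<rho> y)))
                   / max (measure \<mu> (cball x (\<rho> x))) (measure \<mu> (cball y (\<rho> y)))
                 \<le> C * (omega_hat \<Omega> \<omega> (dist x y) / (INF z\<in>K. \<rho> z)) powr \<delta>"
      using goal by (simp add: r_def s_def M_def L_def d_def m_def)
  qed
qed

end
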